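(* Let $k \geq 0$ be an integer and let $t$ be an indeterminate. Define polynomials $A^{k,\ell}(t)$ for integers $\ell \geq 0$ by $A^{k,0}(t) = 1$ and, for $\ell \geq 1$, $$A^{k,\ell}(t) = (1-t^{k+\ell})\, A^{k,\ell-1}(t) + t^{\ell(k+1)} \begin{bmatrix} k+\ell \\ \ell \end{bmatrix}_t .$$ Then for every $\ell \geq 0$, $$A^{k,\ell}(t) = 1 + \sum_{i=1}^{\ell} t^{i(k+\ell+1)} \begin{bmatrix} k \\ i \end{bmatrix}_t \sum_{j=0}^{\ell-i} t^{j(k-i+1)} \begin{bmatrix} i+j-1 \\ j \end{bmatrix}_t .$$
   Context: For integers $a,b$, the $t$-binomial coefficient is $\begin{bmatrix} a \\ b \end{bmatrix}_t = \frac{(t;t)_a}{(t;t)_b (t;t)_{a-b}}$ when $0 \le b \le a$ and $0$ otherwise, where $(x;t)_n = (1-x)(1-xt)(1-xt^2)\cdots(1-xt^{n-1})$ and $(x;t)_0=1$. *)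

theory Defs
  imports "HOL-Computational_Algebra.Polynomial"
begin

definition tvar :: "int poly" where "tvar = [:0, 1:]"

definition qpoch :: "int poly \<Rightarrow> nat \<Rightarrow> int poly" where
  "qpoch x n = (\<Prod>m<n. 1 - x * tvar ^ m)"

text \<open>t-binomial coefficient for integers a, b (exact polynomial division).\<close>
definition qbinom :: "int \<Rightarrow> int \<Rightarrow> int poly" where
  "qbinom a b = (if 0 \<le> b \<and> b \<le> a
     then qpoch tvar (nat a) div (qpoch tvar (nat b) * qpoch tvar (nat (a - b)))
     else 0)"

fun A :: "nat \<Rightarrow> nat \<Rightarrow> int poly" where
  "A k 0 = 1"
| "A k (Suc l) = (1 - tvar ^ (k + Suc l)) * A k l
     + tvar ^ (Suc l * (k + 1)) * qbinom (int (k + Suc l)) (int (Suc l))"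

end

theory Submission
  imports Defs
begin

fun gb :: "nat \<Rightarrow> nat \<Rightarrow> int poly" where
  "gb n 0 = 1"
| "gb 0 (Suc m) = 0"
| "gb (Suc n) (Suc m) = gb n m + tvar ^ Suc m * gb n (Suc m)"

definition qp :: "nat \<Rightarrow> int poly" where
  "qp n = (\<Prod>m<n. 1 - tvar ^ Suc m)"

lemma gb_zero: "n < m \<Longrightarrow> gb n m = 0"
proof (induction n arbitrary: m)
  case 0 then show ?case by (cases m) auto
next
  case (Suc n) then show ?case by (cases m) auto
qed

lemma gb_nn: "gb n n = 1"
  by (induction n) (auto simp: gb_zero)

lemma qp_Suc: "qp (Suc n) = qp n * (1 - tvar ^ Suc n)"
  by (simp add: qp_def)

lemma one_minus_tvar_nz: "(1 - tvar ^ Suc m) \<noteq> 0"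
proof
  assume "1 - tvar ^ Suc m = 0"
  then have "poly (1 - tvar ^ Suc m) (2::int) = 0" by simp
  moreover have "poly (1 - tvar ^ Suc m) (2::int) = 1 - 2 ^ Suc m"
    by (simp add: tvar_def)
  moreover have "(2::int) ^ Suc m \<ge> 2"
  proof -
    have "(1::int) \<le> 2 ^ m" by simp
    then show ?thesis by simp
  qed
  ultimately show False by simp
qed

lemma qp_nz: "qp n \<noteq> 0"
proof (induction n)
  case 0 then show ?case by (simp add: qp_def)
next
  case (Suc n) then show ?case by (simp only: qp_Suc mult_eq_0_iff one_minus_tvar_nz) simp
qed

lemma gb_prod: "m \<le> n \<Longrightarrow> gb n m * qp m * qp (n - m) = qp n"
proof (induction n arbitrary: m)
  case 0 then show ?case by (simp add: qp_def)
next
  case (Suc n)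
  show ?case
  proof (cases m)
    case 0 then show ?thesis by (simp add: qp_def)
  next
    case (Suc m')
    show ?thesis
    proof (cases "m' = n")
      case True then show ?thesis using Suc by (simp add: gb_nn gb_zero qp_def)
    next
      case False
      with Suc \<open>m \<le> Suc n\<close> have lt: "m' < n" by simp
      then obtain d where d: "n - m' = Suc d" by (metis Suc_diff_Suc)
      have h1: "gb n m' * qp m' * qp (Suc d) = qp n" using Suc.IH[of m'] lt d by simp
      have h2: "gb n (Suc m') * qp (Suc m') * qp d = qp n" proof -
        have "n - Suc m' = d" using d by simp
        then show ?thesis using Suc.IH[of "Suc m'"] lt by simp
      qed
      have nd: "n = m' + Suc d" using d lt by simp
      have "gb (Suc n) m * qp m * qp (Suc n - m)
          = (gb n m' + tvar ^ Suc m' * gb n (Suc m')) * (qp m' * (1 - tvar ^ Suc m')) * (qp d * (1 - tvar ^ Suc d))"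
        using Suc d by (simp add: qp_Suc)
      also have "\<dots> = (gb n m' * qp m' * (qp d * (1 - tvar ^ Suc d))) * (1 - tvar ^ Suc m')
           + tvar ^ Suc m' * (gb n (Suc m') * (qp m' * (1 - tvar ^ Suc m')) * qp d) * (1 - tvar ^ Suc d)"
        by (simp add: algebra_simps)
      also have "\<dots> = qp n * (1 - tvar ^ Suc m') + tvar ^ Suc m' * qp n * (1 - tvar ^ Suc d)"
        using h1 h2 by (simp add: qp_Suc)
      also have "\<dots> = qp n * (1 - tvar ^ Suc n)"
        by (simp add: nd algebra_simps power_add)
      also have "\<dots> = qp (Suc n)" by (simp add: qp_Suc)
      finally show ?thesis .
    qed
  qed
qed

lemma cancel_qp: "a * qp x * qp y = b * qp x * qp y \<Longrightarrow> a = b"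
  using qp_nz by (metis mult_right_cancel)

lemma gb_ratio: "gb k i * (1 - tvar ^ (k - i)) = gb k (Suc i) * (1 - tvar ^ Suc i)"
proof (cases "i < k")
  case True
  then obtain d where d: "k - i = Suc d" by (metis Suc_diff_Suc)
  have e: "k - Suc i = d" using d by simp
  have "gb k i * (1 - tvar ^ (k - i)) * qp i * qp d = gb k i * qp i * qp (k - i)"
    using d by (simp add: qp_Suc algebra_simps)
  also have "\<dots> = qp k" using gb_prod[of i k] True by simp
  also have "\<dots> = gb k (Suc i) * qp (Suc i) * qp d" using gb_prod[of "Suc i" k] True e by simp
  also have "\<dots> = gb k (Suc i) * (1 - tvar ^ Suc i) * qp i * qp d" by (simp add: qp_Suc algebra_simps)
  finally show ?thesis by (rule cancel_qp)
next
  case False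
  then show ?thesis
    by (cases "i = k") (auto simp: gb_zero)
qed

lemma gb_pascal2: "m \<le> n \<Longrightarrow> gb (Suc n) (Suc m) = tvar ^ (n - m) * gb n m + gb n (Suc m)"
proof (cases "m = n")
  case True then show ?thesis by (simp add: gb_nn gb_zero)
next
  case False
  assume "m \<le> n"
  with False have lt: "m < n" by simp
  then obtain d where d: "n - m = Suc d" by (metis Suc_diff_Suc)
  have e: "n - Suc m = d" using d by simp
  have nd: "n = m + Suc d" using d lt by simp
  have "gb (Suc n) (Suc m) * qp (Suc m) * qp (Suc d) = qp (Suc n)"
    using gb_prod[of "Suc m" "Suc n"] lt d by simp
  also have "\<dots> = qp n * (1 - tvar ^ Suc n)" by (simp add: qp_Suc)
  also have "\<dots> = tvar ^ Suc d * qp n * (1 - tvar ^ Suc m) + qp n * (1 - tvar ^ Suc d)"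
    by (simp add: nd algebra_simps power_add)
  also have "\<dots> = tvar ^ Suc d * (gb n m * qp m * qp (Suc d)) * (1 - tvar ^ Suc m)
       + (gb n (Suc m) * qp (Suc m) * qp d) * (1 - tvar ^ Suc d)"
    using gb_prod[of m n] gb_prod[of "Suc m" n] lt d e by simp
  also have "\<dots> = (tvar ^ (n - m) * gb n m + gb n (Suc m)) * qp (Suc m) * qp (Suc d)"
    by (simp add: d qp_Suc algebra_simps)
  finally show ?thesis by (rule cancel_qp)
qed

lemma qpoch_qp: "qpoch tvar n = qp n"
  by (simp add: qpoch_def qp_def)

lemma qbinom_gb: "qbinom (int a) (int b) = gb a b"
proof (cases "b \<le> a")
  case True
  have "qp a = gb a b * (qp b * qp (a - b))" using gb_prod[OF True] by (simp add: mult.assoc)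
  moreover have "nat (int a - int b) = a - b" using True by simp
  moreover have nz: "qp b * qp (a - b) \<noteq> 0" using qp_nz by simp
  ultimately show ?thesis using True nonzero_mult_div_cancel_right[OF nz, of "gb a b"]
    by (simp add: qbinom_def qpoch_qp)
next
  case False then show ?thesis by (simp add: qbinom_def gb_zero)
qed

definition S :: "nat \<Rightarrow> nat \<Rightarrow> nat \<Rightarrow> int poly" where
  "S k i m = (\<Sum>j\<le>m. tvar ^ (j * (k + 1 - i)) * gb (i + j - 1) j)"

lemma S_0: "S k i 0 = 1"
  by (simp add: S_def)

lemma S_Suc: "S k i (Suc m) = S k i m + tvar ^ (Suc m * (k + 1 - i)) * gb (i + m) (Suc m)"
  by (simp add: S_def)

lemma ring_aux1:
  fixes a S1 S0 P X Y T :: "'a::comm_ring_1"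
  assumes "(1 - a) * S1 = S0 - P * X"
  shows "(1 - a) * (S1 + P * X) = S0 + P * a * T * Y - P * a * (X + T * Y)"
proof -
  have "(1 - a) * (S1 + P * X) = (1 - a) * S1 + (1 - a) * P * X" by (simp add: algebra_simps)
  also have "\<dots> = S0 - P * X + (1 - a) * P * X" using assms by simp
  also have "\<dots> = S0 + P * a * T * Y - P * a * (X + T * Y)" by (simp add: algebra_simps)
  finally show ?thesis .
qed

lemma L1:
  assumes "i \<le> k"
  shows "(1 - tvar ^ (k - i)) * S k (Suc i) m
       = S k i (Suc m) - tvar ^ (Suc m * (k - i)) * gb (i + Suc m) (Suc m)"
proof -
  obtain d where d: "k - i = d" "k + 1 - i = Suc d" "k + 1 - Suc i = d" using assms by auto
  show ?thesis
  proof (induction m)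
    case 0
    have "gb (Suc i) (Suc 0) = 1 + tvar * gb i 1" by simp
    then show ?case using d by (simp add: S_Suc S_0 algebra_simps)
  next
    case (Suc m)
    define P where "P = tvar ^ (Suc m * d)"
    define X where "X = gb (i + Suc m) (Suc m)"
    define Y where "Y = gb (i + Suc m) (Suc (Suc m))"
    have e1: "S k (Suc i) (Suc m) = S k (Suc i) m + P * X"
      using d by (simp add: S_Suc P_def X_def)
    have e2: "S k i (Suc (Suc m)) = S k i (Suc m) + P * tvar ^ d * tvar ^ Suc (Suc m) * Y"
    proof -
      have "Suc (Suc m) * Suc d = Suc m * d + d + Suc (Suc m)" by (simp add: algebra_simps)
      then have "tvar ^ (Suc (Suc m) * (k + 1 - i)) = P * tvar ^ d * tvar ^ Suc (Suc m)"
        using d by (simp only: P_def power_add)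
      moreover have "i + Suc m = i + Suc m" by simp
      ultimately show ?thesis by (simp add: S_Suc Y_def)
    qed
    have e3: "gb (i + Suc (Suc m)) (Suc (Suc m)) = X + tvar ^ Suc (Suc m) * Y"
      by (simp add: X_def Y_def)
    have e4: "tvar ^ (Suc (Suc m) * d) = P * tvar ^ d"
    proof -
      have "Suc (Suc m) * d = Suc m * d + d" by simp
      then show ?thesis using d by (simp only: P_def power_add)
    qed
    have IH: "(1 - tvar ^ d) * S k (Suc i) m = S k i (Suc m) - P * X"
      using Suc.IH d by (simp add: P_def X_def)
    show ?case
      unfolding d(1) e1 e2 e3 e4 by (rule ring_aux1[OF IH])
  qed
qed

lemma R:
  assumes "i < l"
  shows "(1 - tvar ^ Suc i) * (gb k (Suc i) * S k (Suc i) (l - Suc i))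
       = gb k i * S k i (l - i) - tvar ^ ((k - i) * (l - i)) * gb k i * gb l (l - i)"
proof (cases "i \<le> k")
  case True
  have m: "Suc (l - Suc i) = l - i" "i + Suc (l - Suc i) = l" using assms by auto
  have "(1 - tvar ^ Suc i) * (gb k (Suc i) * S k (Suc i) (l - Suc i))
      = gb k i * ((1 - tvar ^ (k - i)) * S k (Suc i) (l - Suc i))"
  proof -
    have "(1 - tvar ^ Suc i) * (gb k (Suc i) * S k (Suc i) (l - Suc i))
        = (gb k (Suc i) * (1 - tvar ^ Suc i)) * S k (Suc i) (l - Suc i)" by (metis mult.assoc mult.commute)
    also have "\<dots> = (gb k i * (1 - tvar ^ (k - i))) * S k (Suc i) (l - Suc i)" using gb_ratio[of k i] by simp
    finally show ?thesis by (metis mult.assoc)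
  qed
  also have "\<dots> = gb k i * (S k i (l - i) - tvar ^ ((l - i) * (k - i)) * gb l (l - i))"
    using L1[OF True, of "l - Suc i"] m by simp
  finally show ?thesis by (simp add: algebra_simps)
next
  case False
  then show ?thesis by (simp add: gb_zero)
qed

lemma vandermonde:
  "gb (a + b) c = (\<Sum>i\<le>c. tvar ^ (i * (b + i - c)) * gb a i * gb b (c - i))"
proof (induction b arbitrary: c)
  case 0
  have "(\<Sum>i\<le>c. tvar ^ (i * (0 + i - c)) * gb a i * gb 0 (c - i))
      = (\<Sum>i<c. tvar ^ (i * (0 + i - c)) * gb a i * gb 0 (c - i)) + gb a c"
    by (simp add: lessThan_Suc_atMost[symmetric])
  also have "(\<Sum>i<c. tvar ^ (i * (0 + i - c)) * gb a i * gb 0 (c - i)) = 0"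
    by (rule sum.neutral) (auto simp: gb_zero)
  finally show ?case by simp
next
  case (Suc b)
  show ?case
  proof (cases c)
    case 0 then show ?thesis by simp
  next
    case (Suc c')
    define f1 where "f1 i = tvar ^ (i * (b + i - c')) * gb a i * gb b (c' - i)" for i
    define f2 where "f2 i = tvar ^ (i * (b + i - Suc c')) * gb a i * gb b (Suc c' - i)" for i
    define g where "g i = tvar ^ (i * (Suc b + i - Suc c')) * gb a i * gb (Suc b) (Suc c' - i)" for i
    have "gb (a + Suc b) (Suc c') = gb (a + b) c' + tvar ^ Suc c' * gb (a + b) (Suc c')"
      by simp
    also have "\<dots> = (\<Sum>i\<le>c'. f1 i) + tvar ^ Suc c' * (\<Sum>i\<le>Suc c'. f2 i)"
      using Suc.IH[of c'] Suc.IH[of "Suc c'"] by (simp add: f1_def f2_def)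
    also have "\<dots> = (\<Sum>i\<le>c'. f1 i + tvar ^ Suc c' * f2 i) + tvar ^ Suc c' * f2 (Suc c')"
      by (simp add: sum_distrib_left sum.distrib algebra_simps)
    also have "(\<Sum>i\<le>c'. f1 i + tvar ^ Suc c' * f2 i) = (\<Sum>i\<le>c'. g i)"
    proof (rule sum.cong)
      fix i assume "i \<in> {..c'}"
      then have ic: "i \<le> c'" by simp
      have p: "gb (Suc b) (Suc c' - i) = gb b (c' - i) + tvar ^ (Suc c' - i) * gb b (Suc c' - i)"
        using ic by (simp add: Suc_diff_le)
      show "f1 i + tvar ^ Suc c' * f2 i = g i"
      proof (cases "Suc c' \<le> b + i")
        case True
        have "i * (b + i - c') + (Suc c' - i) = Suc c' + i * (b + i - Suc c')"
        proof -
          obtain e where "b + i = Suc c' + e" using True le_Suc_ex by blast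
          then show ?thesis using ic by (simp add: algebra_simps)
        qed
        then have "tvar ^ (i * (b + i - c')) * tvar ^ (Suc c' - i) = tvar ^ Suc c' * tvar ^ (i * (b + i - Suc c'))"
          by (metis power_add)
        then show ?thesis unfolding f1_def f2_def g_def p
          by (simp add: algebra_simps)
      next
        case False
        then have "gb b (Suc c' - i) = 0" by (intro gb_zero) simp
        then show ?thesis unfolding f1_def f2_def g_def p by simp
      qed
    qed simp
    also have "tvar ^ Suc c' * f2 (Suc c') = g (Suc c')"
    proof -
      have "Suc c' + Suc c' * b = Suc c' * Suc b" by simp
      then show ?thesis unfolding f2_def g_def by (simp add: power_add[symmetric])
    qed
    finally show ?thesis using Suc by (simp add: g_def)
  qed
qed

definition Bn :: "nat \<Rightarrow> nat \<Rightarrow> int poly" where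
  "Bn k l = (\<Sum>i\<le>l. tvar ^ (i * (k + l + 1)) * (gb k i * S k i (l - i)))"

lemma E3:
  "(\<Sum>i\<le>l. tvar ^ (i * (k + l + 2)) * (gb k i * S k i (l - i)))
     - (1 - tvar ^ (k + l + 1)) * Bn k l
   = (\<Sum>i\<le>l. tvar ^ ((l + 1) * (k + 1) + i * i + i) * gb k i * gb l (l - i))"
proof -
  define N where "N = k + l + 1"
  define Z where "Z i = gb k i * S k i (l - i)" for i
  define h where "h i = tvar ^ (i * N) * (1 - tvar ^ i) * Z i" for i
  define r where "r i = tvar ^ ((l + 1) * (k + 1) + i * i + i) * gb k i * gb l (l - i)" for i
  have "(\<Sum>i\<le>l. tvar ^ (i * (k + l + 2)) * Z i) - (1 - tvar ^ N) * (\<Sum>i\<le>l. tvar ^ (i * N) * Z i)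
      = (\<Sum>i\<le>l. tvar ^ (i * (k + l + 2)) * Z i - (1 - tvar ^ N) * (tvar ^ (i * N) * Z i))"
    by (simp add: sum_distrib_left sum_subtractf)
  also have "\<dots> = (\<Sum>i\<le>l. tvar ^ ((i + 1) * N) * Z i - h i)"
  proof (rule sum.cong)
    fix i
    have "i * (k + l + 2) = i * N + i" "(i + 1) * N = i * N + N" by (simp_all add: N_def algebra_simps)
    then show "tvar ^ (i * (k + l + 2)) * Z i - (1 - tvar ^ N) * (tvar ^ (i * N) * Z i)
        = tvar ^ ((i + 1) * N) * Z i - h i"
      by (simp add: h_def power_add algebra_simps)
  qed simp
  also have "\<dots> = (\<Sum>i\<le>l. tvar ^ ((i + 1) * N) * Z i) - (\<Sum>i\<le>l. h i)"
    by (simp add: sum_subtractf)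
  also have "(\<Sum>i\<le>l. h i) = (\<Sum>i<l. h (Suc i))"
    by (simp add: sum.atMost_shift h_def)
  also have "\<dots> = (\<Sum>i<l. tvar ^ ((i + 1) * N) * Z i - tvar ^ ((i + 1) * N + (k - i) * (l - i)) * gb k i * gb l (l - i))"
  proof (rule sum.cong)
    fix i assume "i \<in> {..<l}"
    then have il: "i < l" by simp
    have "h (Suc i) = tvar ^ ((i + 1) * N) * ((1 - tvar ^ Suc i) * (gb k (Suc i) * S k (Suc i) (l - Suc i)))"
      by (simp add: h_def Z_def algebra_simps)
    also have "\<dots> = tvar ^ ((i + 1) * N) * (Z i - tvar ^ ((k - i) * (l - i)) * gb k i * gb l (l - i))"
      using R[OF il, of k] by (simp add: Z_def)
    finally show "h (Suc i) = tvar ^ ((i + 1) * N) * Z i - tvar ^ ((i + 1) * N + (k - i) * (l - i)) * gb k i * gb l (l - i)"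
      by (simp add: power_add algebra_simps)
  qed simp
  also have "(\<Sum>i\<le>l. tvar ^ ((i + 1) * N) * Z i) = (\<Sum>i<l. tvar ^ ((i + 1) * N) * Z i) + tvar ^ ((l + 1) * N) * Z l"
    by (simp add: lessThan_Suc_atMost[symmetric])
  finally have "(\<Sum>i\<le>l. tvar ^ (i * (k + l + 2)) * Z i) - (1 - tvar ^ N) * (\<Sum>i\<le>l. tvar ^ (i * N) * Z i)
      = tvar ^ ((l + 1) * N) * Z l + (\<Sum>i<l. tvar ^ ((i + 1) * N + (k - i) * (l - i)) * gb k i * gb l (l - i))"
    by (simp add: sum_subtractf)
  also have "(\<Sum>i<l. tvar ^ ((i + 1) * N + (k - i) * (l - i)) * gb k i * gb l (l - i)) = (\<Sum>i<l. r i)"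
  proof (rule sum.cong)
    fix i assume "i \<in> {..<l}"
    then have il: "i < l" by simp
    show "tvar ^ ((i + 1) * N + (k - i) * (l - i)) * gb k i * gb l (l - i) = r i"
    proof (cases "i \<le> k")
      case True
      obtain d where d: "k = i + d" using True le_add_diff_inverse by metis
      obtain e where e: "l = i + e" using il less_imp_le le_add_diff_inverse by metis
      from d e have "(i + 1) * N + (k - i) * (l - i) = (l + 1) * (k + 1) + i * i + i"
        by (simp add: N_def algebra_simps)
      then show ?thesis by (simp add: r_def)
    next
      case False then show ?thesis by (simp add: r_def gb_zero)
    qed
  qed simp
  also have "tvar ^ ((l + 1) * N) * Z l = r l"
  proof -
    have "(l + 1) * N = (l + 1) * (k + 1) + l * l + l" by (simp add: N_def algebra_simps)
    then show ?thesis by (simp add: Z_def r_def S_0)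
  qed
  also have "r l + (\<Sum>i<l. r i) = (\<Sum>i\<le>l. r i)"
    by (simp add: lessThan_Suc_atMost[symmetric])
  finally show ?thesis by (simp add: Bn_def N_def Z_def r_def)
qed

lemma E1:
  "Bn k (Suc l) = (\<Sum>i\<le>l. tvar ^ (i * (k + l + 2)) * (gb k i * S k i (l - i)))
     + (\<Sum>i\<le>l. tvar ^ ((l + 1) * (k + 1) + i * i) * gb k i * gb l (Suc l - i))
     + tvar ^ ((l + 1) * (k + l + 2)) * gb k (Suc l)"
proof -
  have "Bn k (Suc l) = (\<Sum>i\<le>l. tvar ^ (i * (k + l + 2)) * (gb k i * S k i (Suc l - i)))
      + tvar ^ ((l + 1) * (k + l + 2)) * gb k (Suc l)"
    by (simp add: Bn_def S_0 algebra_simps)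
  also have "(\<Sum>i\<le>l. tvar ^ (i * (k + l + 2)) * (gb k i * S k i (Suc l - i)))
     = (\<Sum>i\<le>l. tvar ^ (i * (k + l + 2)) * (gb k i * S k i (l - i))
         + tvar ^ ((l + 1) * (k + 1) + i * i) * gb k i * gb l (Suc l - i))"
  proof (rule sum.cong)
    fix i assume "i \<in> {..l}"
    then have il: "i \<le> l" by simp
    have sl: "Suc l - i = Suc (l - i)" "i + (l - i) = l" using il by auto
    have Ss: "S k i (Suc l - i) = S k i (l - i) + tvar ^ (Suc (l - i) * (k + 1 - i)) * gb l (Suc l - i)"
      unfolding sl(1) S_Suc sl(2) by simp
    show "tvar ^ (i * (k + l + 2)) * (gb k i * S k i (Suc l - i))
       = tvar ^ (i * (k + l + 2)) * (gb k i * S k i (l - i))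
         + tvar ^ ((l + 1) * (k + 1) + i * i) * gb k i * gb l (Suc l - i)"
    proof (cases "i \<le> k")
      case True
      obtain d where d: "k = i + d" using True le_add_diff_inverse by metis
      obtain e where e: "l = i + e" using il le_add_diff_inverse by metis
      from d e have "i * (k + l + 2) + Suc (l - i) * (k + 1 - i) = (l + 1) * (k + 1) + i * i"
        by (simp add: algebra_simps)
      then have "tvar ^ (i * (k + l + 2)) * tvar ^ (Suc (l - i) * (k + 1 - i)) = tvar ^ ((l + 1) * (k + 1) + i * i)"
        by (metis power_add)
      then show ?thesis unfolding Ss by (simp add: algebra_simps)
    next
      case False then show ?thesis by (simp add: gb_zero)
    qed
  qed simp
  finally show ?thesis by (simp add: sum.distrib)
qed

lemma E2:
  "tvar ^ ((l + 1) * (k + 1)) * gb (k + Suc l) (Suc l)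
   = (\<Sum>i\<le>l. tvar ^ ((l + 1) * (k + 1) + i * i + i) * gb k i * gb l (l - i))
     + (\<Sum>i\<le>l. tvar ^ ((l + 1) * (k + 1) + i * i) * gb k i * gb l (Suc l - i))
     + tvar ^ ((l + 1) * (k + l + 2)) * gb k (Suc l)"
proof -
  have "gb (k + Suc l) (Suc l) = (\<Sum>i\<le>Suc l. tvar ^ (i * i) * gb k i * gb (Suc l) (Suc l - i))"
    using vandermonde[of k "Suc l" "Suc l"] by simp
  also have "\<dots> = (\<Sum>i\<le>l. tvar ^ (i * i) * gb k i * gb (Suc l) (Suc l - i))
       + tvar ^ (Suc l * Suc l) * gb k (Suc l)"
    by simp
  also have "(\<Sum>i\<le>l. tvar ^ (i * i) * gb k i * gb (Suc l) (Suc l - i))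
      = (\<Sum>i\<le>l. tvar ^ (i * i + i) * gb k i * gb l (l - i) + tvar ^ (i * i) * gb k i * gb l (Suc l - i))"
  proof (rule sum.cong)
    fix i assume "i \<in> {..l}"
    then have il: "i \<le> l" by simp
    have sl: "Suc l - i = Suc (l - i)" "l - (l - i) = i" using il by auto
    have "gb (Suc l) (Suc l - i) = tvar ^ i * gb l (l - i) + gb l (Suc l - i)"
      using gb_pascal2[of "l - i" l] sl by simp
    then show "tvar ^ (i * i) * gb k i * gb (Suc l) (Suc l - i)
      = tvar ^ (i * i + i) * gb k i * gb l (l - i) + tvar ^ (i * i) * gb k i * gb l (Suc l - i)"
      by (simp add: power_add algebra_simps)
  qed simp
  finally have "gb (k + Suc l) (Suc l) = (\<Sum>i\<le>l. tvar ^ (i * i + i) * gb k i * gb l (l - i))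
      + (\<Sum>i\<le>l. tvar ^ (i * i) * gb k i * gb l (Suc l - i)) + tvar ^ (Suc l * Suc l) * gb k (Suc l)"
    by (simp add: sum.distrib)
  note G = this
  have p1: "\<And>i. tvar ^ ((l + 1) * (k + 1) + i * i + i) = tvar ^ ((l + 1) * (k + 1)) * tvar ^ (i * i + i)"
    by (simp add: power_add add.assoc)
  have p2: "\<And>i. tvar ^ ((l + 1) * (k + 1) + i * i) = tvar ^ ((l + 1) * (k + 1)) * tvar ^ (i * i)"
    by (simp add: power_add)
  have "(l + 1) * (k + 1) + Suc l * Suc l = (l + 1) * (k + l + 2)" by (simp add: algebra_simps)
  then have p3: "tvar ^ ((l + 1) * (k + l + 2)) = tvar ^ ((l + 1) * (k + 1)) * tvar ^ (Suc l * Suc l)"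
    by (metis power_add)
  show ?thesis unfolding p1 p2 p3 G
    by (simp add: sum_distrib_left algebra_simps)
qed

lemma grp_aux:
  fixes F c Y X L :: "'a::ab_group_add"
  shows "F - c = Y \<Longrightarrow> c + (Y + X + L) = F + X + L"
  by (simp add: algebra_simps)

lemma A_Bn: "A k l = Bn k l"
proof (induction l)
  case 0 then show ?case by (simp add: Bn_def S_0)
next
  case (Suc l)
  have "A k (Suc l) = (1 - tvar ^ (k + Suc l)) * A k l + tvar ^ (Suc l * (k + 1)) * qbinom (int (k + Suc l)) (int (Suc l))"
    by (simp only: A.simps)
  also have "\<dots> = (1 - tvar ^ (k + l + 1)) * Bn k l + tvar ^ ((l + 1) * (k + 1)) * gb (k + Suc l) (Suc l)"
    unfolding qbinom_gb Suc.IH by simp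
  also have "\<dots> = Bn k (Suc l)"
    unfolding E2 E1 by (rule grp_aux[OF E3[where k=k and l=l]])
  finally show ?case .
qed

lemma S_k_0: "S k 0 l = 1"
proof -
  have "S k 0 l = (\<Sum>j\<le>l. if j = 0 then 1 else 0)"
    unfolding S_def by (rule sum.cong) (auto simp: gb_zero)
  then show ?thesis by simp
qed

lemma inner_term:
  assumes "1 \<le> i" "i \<le> k"
  shows "tvar ^ (j * (k + 1 - i)) * gb (i + j - 1) j
       = tvar ^ nat ((int j) * (int k - int i + 1)) * qbinom (int i + int j - 1) (int j)"
proof -
  obtain d where k: "k = i + d" using assms(2) le_add_diff_inverse by metis
  obtain i' where i: "i = Suc i'" using assms(1) by (cases i) auto
  have a: "int j * (int k - int i + 1) = int (j * (k + 1 - i))" unfolding k by (simp add: algebra_simps)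
  have b: "int i + int j - 1 = int (i + j - 1)" unfolding i by simp
  show ?thesis unfolding a b nat_int qbinom_gb ..
qed

lemma outer_term:
  assumes "1 \<le> i"
  shows "tvar ^ (i * (k + l + 1)) * (gb k i * S k i (l - i))
       = tvar ^ (i * (k + l + 1)) * qbinom (int k) (int i) *
           (\<Sum>j=0..l-i. tvar ^ nat ((int j) * (int k - int i + 1))
              * qbinom (int i + int j - 1) (int j))"
proof (cases "i \<le> k")
  case True
  have "S k i (l - i) = (\<Sum>j=0..l-i. tvar ^ nat ((int j) * (int k - int i + 1))
          * qbinom (int i + int j - 1) (int j))"
    unfolding S_def atMost_atLeast0 using inner_term[OF assms True] by (rule sum.cong[OF refl])
  then show ?thesis unfolding qbinom_gb by (simp only: mult.assoc)
next
  case False then show ?thesis unfolding qbinom_gb by (simp add: gb_zero)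
qed

theorem lemma2:
  fixes k l :: nat
  shows "A k l = 1 + (\<Sum>i=1..l. tvar ^ (i * (k + l + 1)) * qbinom (int k) (int i) *
           (\<Sum>j=0..l-i. tvar ^ nat ((int j) * (int k - int i + 1))
              * qbinom (int i + int j - 1) (int j)))"
proof -
  have "A k l = (\<Sum>i=0..l. tvar ^ (i * (k + l + 1)) * (gb k i * S k i (l - i)))"
    unfolding A_Bn Bn_def atMost_atLeast0 ..
  also have "\<dots> = 1 + (\<Sum>i=Suc 0..l. tvar ^ (i * (k + l + 1)) * (gb k i * S k i (l - i)))"
    by (simp add: sum.atLeast_Suc_atMost S_k_0)
  also have "(\<Sum>i=Suc 0..l. tvar ^ (i * (k + l + 1)) * (gb k i * S k i (l - i)))
     = (\<Sum>i=1..l. tvar ^ (i * (k + l + 1)) * qbinom (int k) (int i) *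
           (\<Sum>j=0..l-i. tvar ^ nat ((int j) * (int k - int i + 1))
              * qbinom (int i + int j - 1) (int j)))"
  proof (rule sum.cong)
    fix i assume "i \<in> {1..l}"
    then show "tvar ^ (i * (k + l + 1)) * (gb k i * S k i (l - i))
       = tvar ^ (i * (k + l + 1)) * qbinom (int k) (int i) *
           (\<Sum>j=0..l-i. tvar ^ nat ((int j) * (int k - int i + 1))
              * qbinom (int i + int j - 1) (int j))"
      by (intro outer_term) simp
  qed simp
  finally show ?thesis .
qed

end
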